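(* Let $n\ge 2$ be even, $K_n=(V,E)$ the complete graph, and $M_1,M_2$ perfect matchings in $K_n$. If the graph $(V,M_1\triangle M_2)$ has a single non-trivial connected component, then $\bm{c}=\chi(M_1)-\chi(M_2)$ is a circuit of the Perfect Matching polytope $P_{\mathrm{perfmatch}}(n)=\operatorname{conv}\{\chi(M): M\text{ a perfect matching in }K_n\}$, with circuits taken with respect to the linear description $$\bm{x}(\delta(S))\ge 1\ \text{for all } S\subset V,\ |S|\text{ odd},\ |S|\ge 3;\quad \bm{x}(\delta(v))=1\ \text{for all } v\in V;\quad \bm{x}\ge\bm{0}.$$
   Context: $\chi(M)\in\{0,1\}^E$ is the characteristic vector of $M$; $\triangle$ is symmetric difference; a non-trivial component has more than one node; $\delta(S)$ is the set of edges with exactly one endpoint in $S$, $\delta(v)=\delta(\{v\})$, $\bm{x}(F)=\sum_{e\in F}x_e$. Circuits: for a polytope $P=\{\bm{x}: A\bm{x}=\bm{b},\ B\bm{x}\le \bm{d}\}$ given by a fixed linear system, a nonzero vector $\bm{g}$ is a circuit of $P$ if $A\bm{g}=\bm{0}$ and $\operatorname{supp}(B\bm{g})$ is inclusion-minimal among the sets $\operatorname{supp}(B\bm{y})$ with $A\bm{y}=\bm{0}$, $\bm{y}\neq\bm{0}$. *)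

theory Defs
  imports Complex_Main
begin

text \<open>Complete graph K_n on vertex set V = {0..<n}; edges are 2-element vertex sets.
  Vectors in R^E are functions nat set => real vanishing outside E.\<close>

definition Kedges :: "nat \<Rightarrow> nat set set" where
  "Kedges n = {{u, v} | u v. u < n \<and> v < n \<and> u \<noteq> v}"

definition cut :: "nat \<Rightarrow> nat set \<Rightarrow> nat set set" where
  "cut n S = {e \<in> Kedges n. card (e \<inter> S) = 1}"

definition perfect_matching :: "nat \<Rightarrow> nat set set \<Rightarrow> bool" where
  "perfect_matching n M \<longleftrightarrow> M \<subseteq> Kedges n \<and> (\<forall>v<n. \<exists>!e. e \<in> M \<and> v \<in> e)"

definition charvec :: "nat set set \<Rightarrow> nat set \<Rightarrow> real" where
  "charvec M e = (if e \<in> M then 1 else 0)"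

definition adj :: "nat set set \<Rightarrow> (nat \<times> nat) set" where
  "adj F = {(u, v). {u, v} \<in> F \<and> u \<noteq> v}"

definition component :: "nat \<Rightarrow> nat set set \<Rightarrow> nat \<Rightarrow> nat set" where
  "component n F v = {u. u < n \<and> (v, u) \<in> (adj F)\<^sup>*}"

definition nontrivial_components :: "nat \<Rightarrow> nat set set \<Rightarrow> nat set set" where
  "nontrivial_components n F = {component n F v | v. v < n \<and> card (component n F v) > 1}"

text \<open>Linear system of the perfect matching polytope:
  equalities x(delta(v)) = 1 (v in V); inequality rows x(delta(S)) >= 1 for S a proper
  subset of V with |S| odd, |S| >= 3 (indexed by Inl S), and x_e >= 0 (indexed by Inr e).
  pm_ineq_supp n y is supp(B y).\<close>

definition in_RE :: "nat \<Rightarrow> (nat set \<Rightarrow> real) \<Rightarrow> bool" where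
  "in_RE n y \<longleftrightarrow> (\<forall>e. e \<notin> Kedges n \<longrightarrow> y e = 0)"

definition pm_eq_kernel :: "nat \<Rightarrow> (nat set \<Rightarrow> real) \<Rightarrow> bool" where
  "pm_eq_kernel n y \<longleftrightarrow> (\<forall>v<n. sum y (cut n {v}) = 0)"

definition pm_ineq_supp :: "nat \<Rightarrow> (nat set \<Rightarrow> real) \<Rightarrow> (nat set + nat set) set" where
  "pm_ineq_supp n y =
     Inl ` {S. S \<subseteq> {..<n} \<and> S \<noteq> {..<n} \<and> odd (card S) \<and> card S \<ge> 3 \<and> sum y (cut n S) \<noteq> 0}
     \<union> Inr ` {e \<in> Kedges n. y e \<noteq> 0}"

definition pm_circuit :: "nat \<Rightarrow> (nat set \<Rightarrow> real) \<Rightarrow> bool" where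
  "pm_circuit n g \<longleftrightarrow>
     in_RE n g \<and> (\<exists>e\<in>Kedges n. g e \<noteq> 0) \<and> pm_eq_kernel n g \<and>
     (\<forall>y. in_RE n y \<and> (\<exists>e\<in>Kedges n. y e \<noteq> 0) \<and> pm_eq_kernel n y \<and>
          pm_ineq_supp n y \<subseteq> pm_ineq_supp n g \<longrightarrow> pm_ineq_supp n y = pm_ineq_supp n g)"

end

theory Submission
  imports Defs
begin

lemma Kedges_sub: "Kedges n \<subseteq> Pow {..<n}"
  by (auto simp: Kedges_def)

lemma finite_Kedges: "finite (Kedges n)"
  using finite_subset[OF Kedges_sub] by auto

lemma cut_single: "cut n {v} = {e\<in>Kedges n. v \<in> e}"
proof -
  have "card (e \<inter> {v}) = 1 \<longleftrightarrow> v \<in> e" for e :: "nat set"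
    by (cases "v \<in> e") auto
  then show ?thesis by (auto simp: cut_def)
qed

lemma finite_cut: "finite (cut n S)"
  using finite_Kedges by (auto simp: cut_def)

lemma pm_sum:
  assumes "perfect_matching n M" "v < n"
  shows "sum (charvec M) (cut n {v}) = 1"
proof -
  from assms obtain e where e: "e \<in> M" "v \<in> e" and u: "\<And>e'. e' \<in> M \<Longrightarrow> v \<in> e' \<Longrightarrow> e' = e"
    unfolding perfect_matching_def by metis
  have eK: "e \<in> Kedges n" using assms e unfolding perfect_matching_def by auto
  have "sum (charvec M) (cut n {v}) = sum (charvec M) {e}"
  proof (rule sum.mono_neutral_right)
    show "finite (cut n {v})" by (rule finite_cut)
    show "{e} \<subseteq> cut n {v}" using eK e by (auto simp: cut_single)
    show "\<forall>i\<in>cut n {v} - {e}. charvec M i = 0"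
      using u by (auto simp: cut_single charvec_def)
  qed
  also have "\<dots> = 1" using e by (simp add: charvec_def)
  finally show ?thesis .
qed

theorem corollary2:
  fixes n :: nat and M1 M2 :: "nat set set"
  assumes "n \<ge> 2" and "even n"
    and "perfect_matching n M1" and "perfect_matching n M2"
    and "card (nontrivial_components n (M1 - M2 \<union> (M2 - M1))) = 1"
  shows "pm_circuit n (\<lambda>e. charvec M1 e - charvec M2 e)"
proof -
  define F where "F = M1 - M2 \<union> (M2 - M1)"
  define g where "g = (\<lambda>e. charvec M1 e - charvec M2 e)"
  have M1K: "M1 \<subseteq> Kedges n" and M2K: "M2 \<subseteq> Kedges n"
    using assms(3,4) by (auto simp: perfect_matching_def)
  have FK: "F \<subseteq> Kedges n" using M1K M2K by (auto simp: F_def)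
  have u1: "\<And>v e e'. e \<in> M1 \<Longrightarrow> e' \<in> M1 \<Longrightarrow> v \<in> e \<Longrightarrow> v \<in> e' \<Longrightarrow> e = e'"
  proof -
    fix v e e' assume h: "e \<in> M1" "e' \<in> M1" "v \<in> e" "v \<in> e'"
    then have "v < n" using M1K Kedges_sub by blast
    then show "e = e'" using assms(3) h unfolding perfect_matching_def by metis
  qed
  have u2: "\<And>v e e'. e \<in> M2 \<Longrightarrow> e' \<in> M2 \<Longrightarrow> v \<in> e \<Longrightarrow> v \<in> e' \<Longrightarrow> e = e'"
  proof -
    fix v e e' assume h: "e \<in> M2" "e' \<in> M2" "v \<in> e" "v \<in> e'"
    then have "v < n" using M2K Kedges_sub by blast
    then show "e = e'" using assms(4) h unfolding perfect_matching_def by metis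
  qed
  have g1: "e \<in> M1 - M2 \<Longrightarrow> g e = 1" for e by (simp add: g_def charvec_def)
  have g2: "e \<in> M2 - M1 \<Longrightarrow> g e = -1" for e by (simp add: g_def charvec_def)
  have g0: "e \<notin> F \<Longrightarrow> g e = 0" for e by (auto simp: g_def charvec_def F_def)
  have gnz: "g e \<noteq> 0 \<longleftrightarrow> e \<in> F" for e
    using g0 g1 g2 by (cases "e \<in> M1 - M2"; cases "e \<in> M2 - M1") (auto simp: F_def)
  have inRE: "in_RE n g" using g0 FK by (auto simp: in_RE_def)
  have kern: "pm_eq_kernel n g"
    unfolding pm_eq_kernel_def g_def
    using pm_sum[OF assms(3)] pm_sum[OF assms(4)] by (simp add: sum_subtractf)
  define NC where "NC = nontrivial_components n F"
  have compin: "component n F p \<in> NC" if "{p, q} \<in> F" "p \<noteq> q" for p q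
  proof -
    have pq: "p < n" "q < n" using that FK Kedges_sub by blast+
    have "(p, q) \<in> adj F" using that by (auto simp: adj_def)
    then have "{p, q} \<subseteq> component n F p" using pq by (auto simp: component_def)
    moreover have "finite (component n F p)" by (auto simp: component_def)
    ultimately have "card {p, q} \<le> card (component n F p)" by (rule card_mono[rotated])
    then have "card (component n F p) > 1" using that by simp
    then show ?thesis using pq by (auto simp: NC_def nontrivial_components_def)
  qed
  have cNC: "card NC = 1" using assms(5) by (simp add: NC_def F_def)
  then obtain X where NCX: "NC = {X}" by (auto simp: card_Suc_eq)
  obtain a b where ab: "{a, b} \<in> F" "a \<noteq> b"
  proof -
    have "X \<in> NC" using NCX by auto
    then obtain v where v: "X = component n F v" "v < n" "card X > 1"
      by (auto simp: NC_def nontrivial_components_def)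
    have "\<not> X \<subseteq> {v}"
    proof
      assume "X \<subseteq> {v}"
      then have "card X \<le> card {v}" by (rule card_mono[rotated]) simp
      then show False using v by simp
    qed
    then obtain u where "u \<in> X" "u \<noteq> v" by blast
    then have "(v, u) \<in> (adj F)\<^sup>*" "u \<noteq> v" using v by (auto simp: component_def)
    then obtain w where "(v, w) \<in> adj F" by (metis converse_rtranclE)
    then show ?thesis using that by (auto simp: adj_def)
  qed
  have gex: "\<exists>e\<in>Kedges n. g e \<noteq> 0" using ab FK gnz by blast
  show ?thesis
    unfolding pm_circuit_def g_def[symmetric]
  proof (intro conjI allI impI inRE kern gex)
    fix y
    assume hy: "in_RE n y \<and> (\<exists>e\<in>Kedges n. y e \<noteq> 0) \<and> pm_eq_kernel n y \<and>
          pm_ineq_supp n y \<subseteq> pm_ineq_supp n g"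
    have yz: "y e = 0" if "e \<notin> F" for e
    proof (cases "e \<in> Kedges n")
      case True
      show ?thesis
      proof (rule ccontr)
        assume "y e \<noteq> 0"
        then have "Inr e \<in> pm_ineq_supp n y" using True by (auto simp: pm_ineq_supp_def)
        then have "Inr e \<in> pm_ineq_supp n g" using hy by blast
        then have "g e \<noteq> 0" by (auto simp: pm_ineq_supp_def)
        then show False using gnz that by blast
      qed
    next
      case False then show ?thesis using hy by (auto simp: in_RE_def)
    qed
    define h where "h = (\<lambda>e. y e * g e)"
    have key0: "h e1 = h e2" if "e1 \<in> M1 - M2" "e2 \<in> M2 - M1" "v \<in> e1" "v \<in> e2" for e1 e2 v
    proof -
      have v: "v < n" using that M1K Kedges_sub by blast
      have ne: "e1 \<noteq> e2" using that by auto
      have "sum y {e1, e2} = sum y (cut n {v})"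
      proof (rule sum.mono_neutral_left)
        show "finite (cut n {v})" by (rule finite_cut)
        show "{e1, e2} \<subseteq> cut n {v}" using that M1K M2K by (auto simp: cut_single)
        show "\<forall>i\<in>cut n {v} - {e1, e2}. y i = 0"
        proof
          fix i assume i: "i \<in> cut n {v} - {e1, e2}"
          have "i \<notin> F"
          proof
            assume "i \<in> F"
            have vi: "v \<in> i" and ni: "i \<noteq> e1" "i \<noteq> e2" using i by (auto simp: cut_single)
            show False
            proof (cases "i \<in> M1")
              case True
              then show False using u1[OF True _ vi that(3)] that(1) ni by blast
            next
              case False
              then have "i \<in> M2" using \<open>i \<in> F\<close> by (auto simp: F_def)
              then show False using u2[OF _ _ vi that(4)] that(2) ni by blast
            qed
          qed
          then show "y i = 0" by (rule yz)
        qed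
      qed
      moreover have "sum y (cut n {v}) = 0" using hy v by (auto simp: pm_eq_kernel_def)
      ultimately have "y e1 + y e2 = 0" using ne by simp
      then show ?thesis using g1[OF that(1)] g2[OF that(2)] by (simp add: h_def)
    qed
    have key: "h e1 = h e2" if "e1 \<in> F" "e2 \<in> F" "v \<in> e1" "v \<in> e2" for e1 e2 v
    proof (cases "e1 = e2")
      case True then show ?thesis by simp
    next
      case ne: False
      show ?thesis
      proof (cases "e1 \<in> M1")
        case True
        then have "e1 \<in> M1 - M2" using that(1) by (auto simp: F_def)
        moreover have "e2 \<notin> M1" using u1[OF True _ that(3) that(4)] ne by blast
        then have "e2 \<in> M2 - M1" using that(2) by (auto simp: F_def)
        ultimately show ?thesis using key0 that(3,4) by blast
      next
        case False
        then have "e1 \<in> M2 - M1" using that(1) by (auto simp: F_def)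
        moreover have "e2 \<notin> M2" using u2[of e1 e2 v] \<open>e1 \<in> M2 - M1\<close> that(3,4) ne by blast
        then have "e2 \<in> M1 - M2" using that(2) by (auto simp: F_def)
        ultimately show ?thesis using key0[of e2 e1 v] that(3,4) by simp
      qed
    qed
    define c where "c = h {a, b}"
    have reach: "(a, u) \<in> (adj F)\<^sup>* \<Longrightarrow> \<forall>e\<in>F. u \<in> e \<longrightarrow> h e = c" for u
    proof (induction rule: rtrancl_induct)
      case base
      show ?case
      proof (intro ballI impI)
        fix e assume "e \<in> F" "a \<in> e"
        then show "h e = c" unfolding c_def using key[of e "{a, b}" a] ab(1) by simp
      qed
    next
      case (step u w)
      then have uw: "{u, w} \<in> F" by (auto simp: adj_def)
      then have huw: "h {u, w} = c" using step.IH by simp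
      show ?case
      proof (intro ballI impI)
        fix e assume "e \<in> F" "w \<in> e"
        then show "h e = c" using key[of e "{u, w}" w] uw huw by simp
      qed
    qed
    have allF: "h e = c" if eF: "e \<in> F" for e
    proof -
      have "e \<in> Kedges n" using eF FK by blast
      then obtain p q where e: "e = {p, q}" "p \<noteq> q" by (auto simp: Kedges_def)
      have "component n F p = component n F a"
        using compin[of p q] compin[of a b] e eF ab NCX by auto
      moreover have "p \<in> component n F p"
        using e eF FK Kedges_sub by (auto simp: component_def)
      ultimately have "(a, p) \<in> (adj F)\<^sup>*" by (auto simp: component_def)
      then show ?thesis using reach e eF by blast
    qed
    have yc: "y = (\<lambda>e. c * g e)"
    proof
      fix e
      show "y e = c * g e"
      proof (cases "e \<in> F")
        case True
        then have "g e = 1 \<or> g e = -1" using g1 g2 by (auto simp: F_def)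
        moreover have "y e * g e = c" using allF[OF True] by (simp add: h_def)
        ultimately show ?thesis by auto
      next
        case False then show ?thesis using yz g0 by simp
      qed
    qed
    have "c \<noteq> 0" using hy yc by auto
    then show "pm_ineq_supp n y = pm_ineq_supp n g"
      unfolding yc pm_ineq_supp_def by (simp add: sum_distrib_left[symmetric])
  qed
qed

end
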